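(* Let $1<w\le 2$, $h>1$, $k\ge 2$, and let $\frac12\le y_1<\dots<y_n\le h-\frac12$ be uniformly spaced with $y_{i+1}-y_i=\frac1k$ for all $i$. Let $(\mathbf x,\prec)$ be a $\frac1k$-reasonable layout of this instance. For every bad square $s_i$ that is not a standard bad square, at least one of its neighbours $s_{i-1}$, $s_{i+1}$ (those that exist) is a standard bad square.
   Context: The instance is the strip $T=[0,w]\times[0,h]$ with the given $y_i$. A layout is a pair $(\mathbf x,\prec)$ where $\mathbf x=(x_1,\dots,x_n)$ with $x_i\in[\frac12,w-\frac12]$, and $\prec$ is a total order on the squares $s_1,\dots,s_n$, where $s_i$ is the closed axis-parallel unit square with centre $(x_i,y_i)$. If $s_i\prec s_j$ we say $s_j$ is in front of $s_i$ and $s_i$ is behind $s_j$. A point $p$ on the boundary of $s_i$ is visible if every square $s_j$ ($j\neq i$) containing $p$ is behind $s_i$, and covered otherwise. The visible perimeter of $s_i$ is the total length of its visible boundary points; the gap of $s_i$ is its visible perimeter minus $2$, the gap of a layout is the minimum gap of its squares, and a layout is $\varepsilon$-reasonable if its gap is larger than $\varepsilon$. A bad square is a square with at least two of its four corners covered; a standard bad square is a bad square one of whose vertical sides is entirely covered. *)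

theory Defs
  imports "HOL-Analysis.Analysis"
begin

text \<open>Squares are indexed by 0..<n (the paper uses 1..n). Square i has centre (x i, y i).
  The depth order is a strict total order prec on {0..<n}; prec j i means s_j is behind s_i.\<close>

definition strict_total_order_on :: "nat set \<Rightarrow> (nat \<Rightarrow> nat \<Rightarrow> bool) \<Rightarrow> bool" where
  "strict_total_order_on I r \<longleftrightarrow>
     (\<forall>i\<in>I. \<not> r i i) \<and>
     (\<forall>i\<in>I. \<forall>j\<in>I. \<forall>l\<in>I. r i j \<longrightarrow> r j l \<longrightarrow> r i l) \<and>
     (\<forall>i\<in>I. \<forall>j\<in>I. i \<noteq> j \<longrightarrow> r i j \<or> r j i)"

definition sq :: "(nat \<Rightarrow> real) \<Rightarrow> (nat \<Rightarrow> real) \<Rightarrow> nat \<Rightarrow> (real \<times> real) set" where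
  "sq x y i = cbox (x i - 1/2, y i - 1/2) (x i + 1/2, y i + 1/2)"

definition visible ::
  "nat \<Rightarrow> (nat \<Rightarrow> real) \<Rightarrow> (nat \<Rightarrow> real) \<Rightarrow> (nat \<Rightarrow> nat \<Rightarrow> bool) \<Rightarrow> nat \<Rightarrow> real \<times> real \<Rightarrow> bool" where
  "visible n x y prec i p \<longleftrightarrow> p \<in> frontier (sq x y i) \<and>
     (\<forall>j<n. j \<noteq> i \<longrightarrow> p \<in> sq x y j \<longrightarrow> prec j i)"

definition covered ::
  "nat \<Rightarrow> (nat \<Rightarrow> real) \<Rightarrow> (nat \<Rightarrow> real) \<Rightarrow> (nat \<Rightarrow> nat \<Rightarrow> bool) \<Rightarrow> nat \<Rightarrow> real \<times> real \<Rightarrow> bool" where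
  "covered n x y prec i p \<longleftrightarrow> p \<in> frontier (sq x y i) \<and> \<not> visible n x y prec i p"

definition bottom_side :: "(nat \<Rightarrow> real) \<Rightarrow> (nat \<Rightarrow> real) \<Rightarrow> nat \<Rightarrow> real \<Rightarrow> real \<times> real" where
  "bottom_side x y i t = (x i - 1/2 + t, y i - 1/2)"
definition top_side :: "(nat \<Rightarrow> real) \<Rightarrow> (nat \<Rightarrow> real) \<Rightarrow> nat \<Rightarrow> real \<Rightarrow> real \<times> real" where
  "top_side x y i t = (x i - 1/2 + t, y i + 1/2)"
definition left_side :: "(nat \<Rightarrow> real) \<Rightarrow> (nat \<Rightarrow> real) \<Rightarrow> nat \<Rightarrow> real \<Rightarrow> real \<times> real" where
  "left_side x y i t = (x i - 1/2, y i - 1/2 + t)"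
definition right_side :: "(nat \<Rightarrow> real) \<Rightarrow> (nat \<Rightarrow> real) \<Rightarrow> nat \<Rightarrow> real \<Rightarrow> real \<times> real" where
  "right_side x y i t = (x i + 1/2, y i - 1/2 + t)"

text \<open>Visible perimeter: total length of visible boundary points (corners have measure zero,
  so summing over the four closed sides is the length of the visible part of the boundary).\<close>
definition visible_perimeter ::
  "nat \<Rightarrow> (nat \<Rightarrow> real) \<Rightarrow> (nat \<Rightarrow> real) \<Rightarrow> (nat \<Rightarrow> nat \<Rightarrow> bool) \<Rightarrow> nat \<Rightarrow> real" where
  "visible_perimeter n x y prec i =
     measure lebesgue {t \<in> {0..1}. visible n x y prec i (bottom_side x y i t)} +
     measure lebesgue {t \<in> {0..1}. visible n x y prec i (top_side x y i t)} +
     measure lebesgue {t \<in> {0..1}. visible n x y prec i (left_side x y i t)} +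
     measure lebesgue {t \<in> {0..1}. visible n x y prec i (right_side x y i t)}"

definition square_gap ::
  "nat \<Rightarrow> (nat \<Rightarrow> real) \<Rightarrow> (nat \<Rightarrow> real) \<Rightarrow> (nat \<Rightarrow> nat \<Rightarrow> bool) \<Rightarrow> nat \<Rightarrow> real" where
  "square_gap n x y prec i = visible_perimeter n x y prec i - 2"

definition layout_gap ::
  "nat \<Rightarrow> (nat \<Rightarrow> real) \<Rightarrow> (nat \<Rightarrow> real) \<Rightarrow> (nat \<Rightarrow> nat \<Rightarrow> bool) \<Rightarrow> real" where
  "layout_gap n x y prec = Min (square_gap n x y prec ` {0..<n})"

definition reasonable ::
  "real \<Rightarrow> nat \<Rightarrow> (nat \<Rightarrow> real) \<Rightarrow> (nat \<Rightarrow> real) \<Rightarrow> (nat \<Rightarrow> nat \<Rightarrow> bool) \<Rightarrow> bool" where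
  "reasonable \<epsilon> n x y prec \<longleftrightarrow> layout_gap n x y prec > \<epsilon>"

definition is_layout ::
  "real \<Rightarrow> nat \<Rightarrow> (nat \<Rightarrow> real) \<Rightarrow> (nat \<Rightarrow> nat \<Rightarrow> bool) \<Rightarrow> bool" where
  "is_layout w n x prec \<longleftrightarrow> (\<forall>i<n. 1/2 \<le> x i \<and> x i \<le> w - 1/2) \<and> strict_total_order_on {0..<n} prec"

definition corners :: "(nat \<Rightarrow> real) \<Rightarrow> (nat \<Rightarrow> real) \<Rightarrow> nat \<Rightarrow> (real \<times> real) set" where
  "corners x y i = {(x i - 1/2, y i - 1/2), (x i + 1/2, y i - 1/2),
                    (x i - 1/2, y i + 1/2), (x i + 1/2, y i + 1/2)}"

definition bad_square ::
  "nat \<Rightarrow> (nat \<Rightarrow> real) \<Rightarrow> (nat \<Rightarrow> real) \<Rightarrow> (nat \<Rightarrow> nat \<Rightarrow> bool) \<Rightarrow> nat \<Rightarrow> bool" where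
  "bad_square n x y prec i \<longleftrightarrow> card {c \<in> corners x y i. covered n x y prec i c} \<ge> 2"

definition standard_bad_square ::
  "nat \<Rightarrow> (nat \<Rightarrow> real) \<Rightarrow> (nat \<Rightarrow> real) \<Rightarrow> (nat \<Rightarrow> nat \<Rightarrow> bool) \<Rightarrow> nat \<Rightarrow> bool" where
  "standard_bad_square n x y prec i \<longleftrightarrow> bad_square n x y prec i \<and>
     ((\<forall>t\<in>{0..1}. covered n x y prec i (left_side x y i t)) \<or>
      (\<forall>t\<in>{0..1}. covered n x y prec i (right_side x y i t)))"

end

theory Submission
  imports Defs
begin

lemma mem_sq: "(p1,p2) \<in> sq x y j \<longleftrightarrow> x j - 1/2 \<le> p1 \<and> p1 \<le> x j + 1/2 \<and> y j - 1/2 \<le> p2 \<and> p2 \<le> y j + 1/2"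
  by (auto simp: sq_def cbox_Pair_eq)
lemma box_pair: "((p1::real),(p2::real)) \<in> box ((a::real),(c::real)) (b,d) \<longleftrightarrow> a < p1 \<and> p1 < b \<and> c < p2 \<and> p2 < (d::real)"
  by (auto simp: mem_box Basis_prod_def)
lemma fr_sq: "(p1,p2) \<in> frontier (sq x y j) \<longleftrightarrow> (p1,p2) \<in> sq x y j \<and> \<not> (x j - 1/2 < p1 \<and> p1 < x j + 1/2 \<and> y j - 1/2 < p2 \<and> p2 < y j + 1/2)"
  unfolding sq_def frontier_cbox by (simp add: box_pair)
lemma meas_le: "S \<subseteq> {a..b} \<Longrightarrow> a \<le> b \<Longrightarrow> measure lebesgue S \<le> b - (a::real)"
proof (cases "S \<in> sets lebesgue")
  case True assume "S \<subseteq> {a..b}" "a \<le> b"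
  then have "measure lebesgue S \<le> measure lebesgue {a..b}"
    using True by (intro measure_mono_fmeasurable) auto
  then show ?thesis using \<open>a\<le>b\<close> by simp
next
  case False assume "a \<le> b" then show ?thesis using False by (simp add: measure_notin_sets)
qed

lemma vis_front:
  assumes "visible n x y prec b p" "strict_total_order_on {0..<n} prec" "b<n" "f<n" "f\<noteq>b" "prec b f"
  shows "p \<notin> sq x y f"
  using assms unfolding visible_def strict_total_order_on_def by (metis atLeastLessThan_iff zero_le)

lemma cov_by:
  assumes "p \<in> frontier (sq x y b)" "f<n" "f\<noteq>b" "prec b f" "strict_total_order_on {0..<n} prec" "b<n" "p \<in> sq x y f"
  shows "covered n x y prec b p"
  using assms vis_front unfolding covered_def by blast

lemma cov_ex:
  assumes "covered n x y prec b p" "strict_total_order_on {0..<n} prec" "b<n"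
  shows "\<exists>j<n. j \<noteq> b \<and> prec b j \<and> p \<in> sq x y j"
  using assms unfolding covered_def visible_def strict_total_order_on_def
  by (metis atLeastLessThan_iff zero_le)

lemma left_fr: "t \<in> {0..1} \<Longrightarrow> left_side x y b t \<in> frontier (sq x y b)"
  by (simp add: left_side_def fr_sq mem_sq)
lemma right_fr: "t \<in> {0..1} \<Longrightarrow> right_side x y b t \<in> frontier (sq x y b)"
  by (simp add: right_side_def fr_sq mem_sq)

lemma vp_bound:
  assumes "{t\<in>{0..1}. visible n x y prec b (bottom_side x y b t)} \<subseteq> {a1..b1}" "a1 \<le> b1"
    "{t\<in>{0..1}. visible n x y prec b (top_side x y b t)} \<subseteq> {a2..b2}" "a2 \<le> b2"
    "{t\<in>{0..1}. visible n x y prec b (left_side x y b t)} \<subseteq> {a3..b3}" "a3 \<le> b3"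
    "{t\<in>{0..1}. visible n x y prec b (right_side x y b t)} \<subseteq> {a4..b4}" "a4 \<le> b4"
  shows "visible_perimeter n x y prec b \<le> (b1-a1)+(b2-a2)+(b3-a3)+(b4-a4)"
  unfolding visible_perimeter_def using meas_le[OF assms(1,2)] meas_le[OF assms(3,4)]
     meas_le[OF assms(5,6)] meas_le[OF assms(7,8)] by linarith

lemma sandwich:
  assumes ord: "strict_total_order_on {0..<n} prec"
  and xb: "\<forall>i<n. 1/2 \<le> x i \<and> x i \<le> w - 1/2" "w \<le> 2"
  and bn: "b<n" "f1<n" "f2<n" "f1\<noteq>b" "f2\<noteq>b" "prec b f1" "prec b f2"
  and yy: "y b \<le> y f1" "y f2 \<le> y b" "y f1 - y f2 \<le> 1"
  and vp: "visible_perimeter n x y prec b > 2"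
  shows "(\<forall>t\<in>{0..1}. covered n x y prec b (left_side x y b t)) \<or>
         (\<forall>t\<in>{0..1}. covered n x y prec b (right_side x y b t))"
proof -
  have dx: "\<And>a c. a<n \<Longrightarrow> c<n \<Longrightarrow> x a - x c \<le> 1"
  proof -
    fix a c assume "a<n" "c<n"
    then have "x a \<le> w - 1/2" "1/2 \<le> x c" using xb by auto
    then show "x a - x c \<le> 1" using xb by linarith
  qed
  have V: "\<And>p. visible n x y prec b p \<Longrightarrow> p \<notin> sq x y f1 \<and> p \<notin> sq x y f2"
    using vis_front[OF _ ord bn(1)] bn by blast
  consider (L) "x f1 \<le> x b \<and> x f2 \<le> x b" | (R) "x f1 \<ge> x b \<and> x f2 \<ge> x b"
    | (O1) "x f1 < x b \<and> x b < x f2" | (O2) "x f2 < x b \<and> x b < x f1" by linarith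
  then show ?thesis
  proof cases
    case L
    have "covered n x y prec b (left_side x y b t)" if t: "t\<in>{0..1}" for t
    proof (cases "t \<ge> y f1 - y b")
      case True
      have "left_side x y b t \<in> sq x y f1" using True t L dx[of b f1] bn yy by (auto simp: left_side_def mem_sq)
      then show ?thesis using cov_by[OF left_fr[OF t] bn(2) bn(4) bn(6) ord bn(1)] by blast
    next
      case False
      have "left_side x y b t \<in> sq x y f2" using False t L dx[of b f2] bn yy by (auto simp: left_side_def mem_sq)
      then show ?thesis using cov_by[OF left_fr[OF t] bn(3) bn(5) bn(7) ord bn(1)] by blast
    qed
    then show ?thesis by blast
  next
    case R
    have "covered n x y prec b (right_side x y b t)" if t: "t\<in>{0..1}" for t
    proof (cases "t \<ge> y f1 - y b")
      case True
      have "right_side x y b t \<in> sq x y f1" using True t R dx[of f1 b] bn yy by (auto simp: right_side_def mem_sq)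
      then show ?thesis using cov_by[OF right_fr[OF t] bn(2) bn(4) bn(6) ord bn(1)] by blast
    next
      case False
      have "right_side x y b t \<in> sq x y f2" using False t R dx[of f2 b] bn yy by (auto simp: right_side_def mem_sq)
      then show ?thesis using cov_by[OF right_fr[OF t] bn(3) bn(5) bn(7) ord bn(1)] by blast
    qed
    then show ?thesis by blast
  next
    case O1
    have "visible_perimeter n x y prec b \<le> (x f2 - x b - 0) + (1 - (x f1 + 1 - x b)) + (y f1 - y b - 0) + (1 - (1 - (y b - y f2)))"
    proof (rule vp_bound)
      show "{t\<in>{0..1}. visible n x y prec b (bottom_side x y b t)} \<subseteq> {0..x f2 - x b}"
        using O1 yy by (force simp: bottom_side_def mem_sq dest: V)
      show "{t\<in>{0..1}. visible n x y prec b (top_side x y b t)} \<subseteq> {x f1 + 1 - x b..1}"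
        using O1 yy by (force simp: top_side_def mem_sq dest: V)
      show "{t\<in>{0..1}. visible n x y prec b (left_side x y b t)} \<subseteq> {0..y f1 - y b}"
        using O1 yy dx[of b f1] bn by (force simp: left_side_def mem_sq dest: V)
      show "{t\<in>{0..1}. visible n x y prec b (right_side x y b t)} \<subseteq> {1 - (y b - y f2)..1}"
        using O1 yy dx[of f2 b] bn by (force simp: right_side_def mem_sq dest: V)
    qed (use O1 yy in auto)
    then show ?thesis using vp dx[of f2 f1] bn yy by linarith
  next
    case O2
    have "visible_perimeter n x y prec b \<le> (1 - (x f2 + 1 - x b)) + (x f1 - x b - 0) + (1 - (1 - (y b - y f2))) + (y f1 - y b - 0)"
    proof (rule vp_bound)
      show "{t\<in>{0..1}. visible n x y prec b (bottom_side x y b t)} \<subseteq> {x f2 + 1 - x b..1}"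
        using O2 yy by (force simp: bottom_side_def mem_sq dest: V)
      show "{t\<in>{0..1}. visible n x y prec b (top_side x y b t)} \<subseteq> {0..x f1 - x b}"
        using O2 yy by (force simp: top_side_def mem_sq dest: V)
      show "{t\<in>{0..1}. visible n x y prec b (left_side x y b t)} \<subseteq> {1 - (y b - y f2)..1}"
        using O2 yy dx[of b f2] bn by (force simp: left_side_def mem_sq dest: V)
      show "{t\<in>{0..1}. visible n x y prec b (right_side x y b t)} \<subseteq> {0..y f1 - y b}"
        using O2 yy dx[of f1 b] bn by (force simp: right_side_def mem_sq dest: V)
    qed (use O2 yy in auto)
    then show ?thesis using vp dx[of f1 f2] bn yy by linarith
  qed
qed

lemma dx_le:
  fixes x :: "nat \<Rightarrow> real"
  assumes xb: "\<forall>i<n. 1/2 \<le> x i \<and> x i \<le> w - 1/2" "w \<le> 2" and "a<n" "c<n"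
  shows "x a - x c \<le> 1"
proof -
  have "x a \<le> w - 1/2" "1/2 \<le> x c" using assms by auto
  then show ?thesis using xb by linarith
qed

lemma above2:
  assumes ord: "strict_total_order_on {0..<n} prec"
  and xb: "\<forall>i<n. 1/2 \<le> x i \<and> x i \<le> w - 1/2" "w \<le> 2"
  and bn: "b<n" "f1<n" "f2<n" "f1\<noteq>b" "f2\<noteq>b" "prec b f1" "prec b f2"
  and yy: "y b \<le> y f1" "y f1 - y b \<le> 1" "y b \<le> y f2" "y f2 - y b \<le> 1"
  and xx: "x f1 \<le> x b" "x b \<le> x f2"
  shows "visible_perimeter n x y prec b \<le> 1 + (y f1 - y b) + (y f2 - y b)"
proof -
  have V: "\<And>p. visible n x y prec b p \<Longrightarrow> p \<notin> sq x y f1 \<and> p \<notin> sq x y f2"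
    using vis_front[OF _ ord bn(1)] bn by blast
  have "visible_perimeter n x y prec b \<le> (1 - 0) + (0 - 0) + (y f1 - y b - 0) + (y f2 - y b - 0)"
  proof (rule vp_bound)
    show "{t\<in>{0..1}. visible n x y prec b (bottom_side x y b t)} \<subseteq> {0..1}" by auto
    show "{t\<in>{0..1}. visible n x y prec b (top_side x y b t)} \<subseteq> {0..0}"
      using xx yy dx_le[OF xb, of f2 f1] bn by (force simp: top_side_def mem_sq dest: V)
    show "{t\<in>{0..1}. visible n x y prec b (left_side x y b t)} \<subseteq> {0..y f1 - y b}"
      using xx yy dx_le[OF xb, of b f1] bn by (force simp: left_side_def mem_sq dest: V)
    show "{t\<in>{0..1}. visible n x y prec b (right_side x y b t)} \<subseteq> {0..y f2 - y b}"
      using xx yy dx_le[OF xb, of f2 b] bn by (force simp: right_side_def mem_sq dest: V)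
  qed (use yy in auto)
  then show ?thesis by simp
qed

lemma below2:
  assumes ord: "strict_total_order_on {0..<n} prec"
  and xb: "\<forall>i<n. 1/2 \<le> x i \<and> x i \<le> w - 1/2" "w \<le> 2"
  and bn: "b<n" "f1<n" "f2<n" "f1\<noteq>b" "f2\<noteq>b" "prec b f1" "prec b f2"
  and yy: "y f1 \<le> y b" "y b - y f1 \<le> 1" "y f2 \<le> y b" "y b - y f2 \<le> 1"
  and xx: "x f1 \<le> x b" "x b \<le> x f2"
  shows "visible_perimeter n x y prec b \<le> 1 + (y b - y f1) + (y b - y f2)"
proof -
  have V: "\<And>p. visible n x y prec b p \<Longrightarrow> p \<notin> sq x y f1 \<and> p \<notin> sq x y f2"
    using vis_front[OF _ ord bn(1)] bn by blast
  have "visible_perimeter n x y prec b \<le> (0 - 0) + (1 - 0) + (1 - (1 - (y b - y f1))) + (1 - (1 - (y b - y f2)))"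
  proof (rule vp_bound)
    show "{t\<in>{0..1}. visible n x y prec b (top_side x y b t)} \<subseteq> {0..1}" by auto
    show "{t\<in>{0..1}. visible n x y prec b (bottom_side x y b t)} \<subseteq> {0..0}"
      using xx yy dx_le[OF xb, of f2 f1] bn by (force simp: bottom_side_def mem_sq dest: V)
    show "{t\<in>{0..1}. visible n x y prec b (left_side x y b t)} \<subseteq> {1 - (y b - y f1)..1}"
      using xx yy dx_le[OF xb, of b f1] bn by (force simp: left_side_def mem_sq dest: V)
    show "{t\<in>{0..1}. visible n x y prec b (right_side x y b t)} \<subseteq> {1 - (y b - y f2)..1}"
      using xx yy dx_le[OF xb, of f2 b] bn by (force simp: right_side_def mem_sq dest: V)
  qed (use yy in auto)
  then show ?thesis by simp
qed

lemma side_bad: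
  assumes "(\<forall>t\<in>{0..1}. covered n x y prec b (left_side x y b t)) \<or>
           (\<forall>t\<in>{0..1}. covered n x y prec b (right_side x y b t))"
  shows "standard_bad_square n x y prec b"
proof -
  let ?S = "{c \<in> corners x y b. covered n x y prec b c}"
  have fin: "finite ?S" unfolding corners_def by simp
  from assms obtain s where s: "s = x b - 1/2 \<or> s = x b + 1/2"
    and c0: "covered n x y prec b (s, y b - 1/2)" and c1: "covered n x y prec b (s, y b + 1/2)"
  proof (elim disjE)
    assume h: "\<forall>t\<in>{0..1}. covered n x y prec b (left_side x y b t)"
    have e0: "left_side x y b 0 = (x b - 1/2, y b - 1/2)" and e1: "left_side x y b 1 = (x b - 1/2, y b + 1/2)"
      by (simp_all add: left_side_def)
    show thesis using h[rule_format, of 0] h[rule_format, of 1] that[of "x b - 1/2"]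
      unfolding e0 e1 by simp
  next
    assume h: "\<forall>t\<in>{0..1}. covered n x y prec b (right_side x y b t)"
    have e0: "right_side x y b 0 = (x b + 1/2, y b - 1/2)" and e1: "right_side x y b 1 = (x b + 1/2, y b + 1/2)"
      by (simp_all add: right_side_def)
    show thesis using h[rule_format, of 0] h[rule_format, of 1] that[of "x b + 1/2"]
      unfolding e0 e1 by simp
  qed
  have sub: "{(s, y b - 1/2), (s, y b + 1/2)} \<subseteq> ?S" using s c0 c1 by (auto simp: corners_def)
  have "card {(s, y b - 1/2), (s, y b + 1/2)} = 2" by simp
  then have "card ?S \<ge> 2" using card_mono[OF fin sub] by simp
  then show ?thesis using assms unfolding standard_bad_square_def bad_square_def by blast
qed


lemma card2_sub: assumes "S \<subseteq> {a,b}" "card S \<ge> 2" shows "a \<in> S \<and> b \<in> S"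
proof (rule ccontr)
  assume "\<not> (a \<in> S \<and> b \<in> S)"
  then have "S \<subseteq> {a} \<or> S \<subseteq> {b}" using assms(1) by auto
  then have "card S \<le> 1"
  proof
    assume "S \<subseteq> {a}" then show ?thesis using card_mono[of "{a}" S] by simp
  next
    assume "S \<subseteq> {b}" then show ?thesis using card_mono[of "{b}" S] by simp
  qed
  then show False using assms(2) by simp
qed

lemma ord_props:
  assumes ord: "strict_total_order_on {0..<n} prec"
  shows tr: "\<And>a b c. a<n \<Longrightarrow> b<n \<Longrightarrow> c<n \<Longrightarrow> prec a b \<Longrightarrow> prec b c \<Longrightarrow> prec a c"
  and tot: "\<And>a b. a<n \<Longrightarrow> b<n \<Longrightarrow> a \<noteq> b \<Longrightarrow> \<not> prec a b \<Longrightarrow> prec b a"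
  and irr: "\<And>a. a<n \<Longrightarrow> \<not> prec a a"
proof -
  have I: "\<forall>i\<in>{0..<n}. \<not> prec i i"
   and T: "\<forall>i\<in>{0..<n}. \<forall>j\<in>{0..<n}. \<forall>l\<in>{0..<n}. prec i j \<longrightarrow> prec j l \<longrightarrow> prec i l"
   and O: "\<forall>i\<in>{0..<n}. \<forall>j\<in>{0..<n}. i \<noteq> j \<longrightarrow> prec i j \<or> prec j i"
    using ord unfolding strict_total_order_on_def by blast+
  fix a b c
  show "a<n \<Longrightarrow> b<n \<Longrightarrow> c<n \<Longrightarrow> prec a b \<Longrightarrow> prec b c \<Longrightarrow> prec a c"
    using T[rule_format, of a b c] by simp
  show "a<n \<Longrightarrow> b<n \<Longrightarrow> a \<noteq> b \<Longrightarrow> \<not> prec a b \<Longrightarrow> prec b a"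
    using O[rule_format, of a b] by simp
  show "a<n \<Longrightarrow> \<not> prec a a" using I by simp
qed

theorem lemma12:
  fixes w h k :: real and n :: nat and y x :: "nat \<Rightarrow> real" and prec :: "nat \<Rightarrow> nat \<Rightarrow> bool"
  assumes "1 < w" "w \<le> 2" "h > 1" "k \<ge> 2"
    and "\<forall>i<n. 1/2 \<le> y i \<and> y i \<le> h - 1/2"
    and "\<forall>i. i + 1 < n \<longrightarrow> y (i + 1) - y i = 1 / k"
    and "is_layout w n x prec"
    and "reasonable (1 / k) n x y prec"
    and "i < n"
    and "bad_square n x y prec i"
    and "\<not> standard_bad_square n x y prec i"
  shows "(0 < i \<and> standard_bad_square n x y prec (i - 1)) \<or>
         (i + 1 < n \<and> standard_bad_square n x y prec (i + 1))"
proof -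
  have ord: "strict_total_order_on {0..<n} prec" and xb: "\<forall>i<n. 1/2 \<le> x i \<and> x i \<le> w - 1/2"
    using assms(7) by (auto simp: is_layout_def)
  note tr = ord_props(1)[OF ord] and tot = ord_props(2)[OF ord]
  have kpos: "k > 0" using assms(4) by simp
  have yk: "\<And>j. j<n \<Longrightarrow> y j = y 0 + real j / k"
  proof -
    fix j show "j<n \<Longrightarrow> y j = y 0 + real j / k"
    proof (induction j)
      case (Suc j)
      have "y (Suc j) - y j = 1/k" using assms(6)[rule_format, of j] Suc.prems by simp
      moreover have "y j = y 0 + real j / k" using Suc by simp
      ultimately show ?case by (simp add: add_divide_distrib)
    qed simp
  qed
  have ydiff: "\<And>a c. a<n \<Longrightarrow> c<n \<Longrightarrow> y a - y c = (real a - real c) / k"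
  proof -
    fix a c assume "a<n" "c<n"
    then have "y a = y 0 + real a / k" "y c = y 0 + real c / k" using yk by blast+
    then show "y a - y c = (real a - real c) / k" by (simp add: diff_divide_distrib)
  qed
  have ymono: "\<And>a c. a<n \<Longrightarrow> c<n \<Longrightarrow> y a \<le> y c \<longleftrightarrow> a \<le> c"
  proof -
    fix a c assume "a<n" "c<n"
    then have "y a - y c = (real a - real c) / k" by (rule ydiff)
    then have "y a \<le> y c \<longleftrightarrow> (real a - real c) / k \<le> 0" by linarith
    also have "\<dots> \<longleftrightarrow> real a - real c \<le> 0" using kpos by (simp add: divide_le_0_iff)
    finally show "y a \<le> y c \<longleftrightarrow> a \<le> c" by simp
  qed
  have ysuc: "\<And>a. a+1<n \<Longrightarrow> y (a+1) - y a = 1/k" using assms(6) by simp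
  have dle: "1/k \<le> 1/2" using assms(4) by (simp add: frac_le)
  have k1: "0 < 1/k" using kpos by simp
  have vp: "\<And>b. b<n \<Longrightarrow> visible_perimeter n x y prec b > 2 + 1/k"
  proof -
    fix b assume b: "b<n"
    have "layout_gap n x y prec \<le> square_gap n x y prec b"
      unfolding layout_gap_def using b by (intro Min_le) auto
    then show "visible_perimeter n x y prec b > 2 + 1/k"
      using assms(8) unfolding reasonable_def square_gap_def by linarith
  qed
  have vp2: "\<And>b. b<n \<Longrightarrow> visible_perimeter n x y prec b > 2"
  proof -
    fix b assume "b<n" then have "visible_perimeter n x y prec b > 2 + 1/k" by (rule vp)
    moreover have "1/k > 0" using kpos by simp
    ultimately show "visible_perimeter n x y prec b > 2" by linarith
  qed
  define TL where "TL = (x i - 1/2, y i + 1/2)"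
  define TR where "TR = (x i + 1/2, y i + 1/2)"
  define BL where "BL = (x i - 1/2, y i - 1/2)"
  define BR where "BR = (x i + 1/2, y i - 1/2)"
  let ?cov = "covered n x y prec i"
  have topc: "\<exists>j<n. i < j \<and> prec i j \<and> y j - y i \<le> 1 \<and> x j \<le> x i" if c: "?cov TL"
  proof -
    obtain j where j: "j<n" "j\<noteq>i" "prec i j" "TL \<in> sq x y j" using cov_ex[OF c ord assms(9)] by blast
    then have "y i \<le> y j" "y j - y i \<le> 1" "x j \<le> x i" by (auto simp: TL_def mem_sq)
    then show ?thesis using j ymono[OF assms(9) j(1)] by auto
  qed
  have topc2: "\<exists>j<n. i < j \<and> prec i j \<and> y j - y i \<le> 1 \<and> x i \<le> x j" if c: "?cov TR"
  proof -
    obtain j where j: "j<n" "j\<noteq>i" "prec i j" "TR \<in> sq x y j" using cov_ex[OF c ord assms(9)] by blast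
    then have "y i \<le> y j" "y j - y i \<le> 1" "x i \<le> x j" by (auto simp: TR_def mem_sq)
    then show ?thesis using j ymono[OF assms(9) j(1)] by auto
  qed
  have botc: "\<exists>j<n. j < i \<and> prec i j \<and> y i - y j \<le> 1 \<and> x j \<le> x i" if c: "?cov BL"
  proof -
    obtain j where j: "j<n" "j\<noteq>i" "prec i j" "BL \<in> sq x y j" using cov_ex[OF c ord assms(9)] by blast
    then have "y j \<le> y i" "y i - y j \<le> 1" "x j \<le> x i" by (auto simp: BL_def mem_sq)
    then show ?thesis using j ymono[OF j(1) assms(9)] by auto
  qed
  have botc2: "\<exists>j<n. j < i \<and> prec i j \<and> y i - y j \<le> 1 \<and> x i \<le> x j" if c: "?cov BR"
  proof -
    obtain j where j: "j<n" "j\<noteq>i" "prec i j" "BR \<in> sq x y j" using cov_ex[OF c ord assms(9)] by blast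
    then have "y j \<le> y i" "y i - y j \<le> 1" "x i \<le> x j" by (auto simp: BR_def mem_sq)
    then show ?thesis using j ymono[OF j(1) assms(9)] by auto
  qed
  define A where "A \<longleftrightarrow> i+1<n \<and> prec i (i+1)"
  define B where "B \<longleftrightarrow> 0<i \<and> prec i (i-1)"
  have upper: "i+1<n \<and> standard_bad_square n x y prec (i+1)"
    if nA: "\<not> A" and j: "j<n" "i<j" "prec i j" "y j - y i \<le> 1" for j
  proof -
    have "j \<noteq> i+1" using nA j unfolding A_def by auto
    then have ij: "i+1 < j" "i+1<n" using j by auto
    have p1: "prec (i+1) i" using tot[of i "i+1"] nA ij unfolding A_def by auto
    have p2: "prec (i+1) j" using tr[OF ij(2) assms(9) j(1) p1 j(3)] .
    have "y (i+1) \<le> y j" "y i \<le> y (i+1)" using ymono ij assms(9) j by auto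
    then have "standard_bad_square n x y prec (i+1)"
      by (intro side_bad sandwich[OF ord xb assms(2) ij(2) j(1) assms(9) _ _ p2 p1 _ _ j(4) vp2[OF ij(2)]])
        (use ij in auto)
    then show ?thesis using ij by blast
  qed
  have lower: "0<i \<and> standard_bad_square n x y prec (i-1)"
    if nB: "\<not> B" and j: "j<n" "j<i" "prec i j" "y i - y j \<le> 1" for j
  proof -
    have "j \<noteq> i-1" using nB j unfolding B_def by auto
    then have ij: "j < i-1" "i-1<n" "0<i" using j assms(9) by auto
    have p1: "prec (i-1) i" using tot[of i "i-1"] nB ij assms(9) unfolding B_def by auto
    have p2: "prec (i-1) j" using tr[OF ij(2) assms(9) j(1) p1 j(3)] .
    have "y j \<le> y (i-1)" "y (i-1) \<le> y i" using ymono ij assms(9) j by auto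
    then have "standard_bad_square n x y prec (i-1)"
      by (intro side_bad sandwich[OF ord xb assms(2) ij(2) assms(9) j(1) _ _ p1 p2 _ _ j(4) vp2[OF ij(2)]])
        (use ij in auto)
    then show ?thesis using ij by blast
  qed
  let ?S = "{c \<in> corners x y i. ?cov c}"
  have S2: "card ?S \<ge> 2" using assms(10) unfolding bad_square_def by simp
  have cor: "corners x y i = {BL, BR, TL, TR}" unfolding corners_def TL_def TR_def BL_def BR_def by auto
  show ?thesis
  proof (cases A)
    case True
    then have Ai: "i+1<n" "prec i (i+1)" unfolding A_def by auto
    have y1: "y (i+1) - y i = 1/k" using ysuc Ai by simp
    then have y1': "y i \<le> y (i+1)" "y (i+1) - y i \<le> 1" using k1 dle by linarith+
    show ?thesis
    proof (cases B)
      case True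
      then have Bi: "0<i" "prec i (i-1)" unfolding B_def by auto
      have y2: "y i - y (i-1) = 1/k" using ysuc[of "i-1"] Bi assms(9) by simp
      have yy3: "y i \<le> y (i+1)" "y (i-1) \<le> y i" "y (i+1) - y (i-1) \<le> 1"
        using y1 y2 k1 dle by linarith+
      have "standard_bad_square n x y prec i"
        by (intro side_bad sandwich[OF ord xb assms(2) assms(9) Ai(1) _ _ _ Ai(2) Bi(2) _ _ _ vp2[OF assms(9)]])
          (use Bi yy3 assms(9) in auto)
      then show ?thesis using assms(11) by blast
    next
      case nB: False
      show ?thesis
      proof (cases "?cov BL \<or> ?cov BR")
        case True
        then obtain j where "j<n" "j<i" "prec i j" "y i - y j \<le> 1" using botc botc2 by blast
        then show ?thesis using lower[OF nB] by blast
      next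
        case False
        then have "?S \<subseteq> {TL, TR}" using cor by auto
        then have "?cov TL \<and> ?cov TR" using S2 cor
          by (metis (no_types, lifting) card2_sub mem_Collect_eq)
        then obtain g1 g2 where g1: "g1<n" "i < g1" "prec i g1" "y g1 - y i \<le> 1" "x g1 \<le> x i"
          and g2: "g2<n" "i < g2" "prec i g2" "y g2 - y i \<le> 1" "x i \<le> x g2"
          using topc topc2 by blast
        have "y i \<le> y g1" "y i \<le> y g2" using ymono g1 g2 assms(9) by auto
        show ?thesis
        proof (cases "x (i+1) \<le> x i")
          case True
          have "visible_perimeter n x y prec i \<le> 1 + (y (i+1) - y i) + (y g2 - y i)"
            by (rule above2[OF ord xb assms(2) assms(9) Ai(1) g2(1) _ _ Ai(2) g2(3)]) (use True g2 \<open>y i \<le> y g2\<close> y1 y1' assms(9) in auto)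
          then show ?thesis using vp[OF assms(9)] y1 g2 by linarith
        next
          case False
          have "visible_perimeter n x y prec i \<le> 1 + (y g1 - y i) + (y (i+1) - y i)"
            by (rule above2[OF ord xb assms(2) assms(9) g1(1) Ai(1) _ _ g1(3) Ai(2)]) (use False g1 \<open>y i \<le> y g1\<close> y1 y1' assms(9) in auto)
          then show ?thesis using vp[OF assms(9)] y1 g1 by linarith
        qed
      qed
    qed
  next
    case nA: False
    show ?thesis
    proof (cases "?cov TL \<or> ?cov TR")
      case True
      then obtain j where "j<n" "i<j" "prec i j" "y j - y i \<le> 1" using topc topc2 by blast
      then show ?thesis using upper[OF nA] by blast
    next
      case noT: False
      show ?thesis
      proof (cases B)
        case nB: False
        have "?S \<noteq> {}" using S2 by (metis card.empty not_numeral_le_zero)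
        then have "?cov BL \<or> ?cov BR" using noT cor by auto
        then obtain j where "j<n" "j<i" "prec i j" "y i - y j \<le> 1" using botc botc2 by blast
        then show ?thesis using lower[OF nB] by blast
      next
        case True
        then have Bi: "0<i" "prec i (i-1)" unfolding B_def by auto
        have y2: "y i - y (i-1) = 1/k" using ysuc[of "i-1"] Bi assms(9) by simp
        then have y2': "y (i-1) \<le> y i" "y i - y (i-1) \<le> 1" using k1 dle by linarith+
        have i1: "i-1<n" "i-1\<noteq>i" using Bi assms(9) by auto
        have "?S \<subseteq> {BL, BR}" using cor noT by auto
        then have "?cov BL \<and> ?cov BR" using S2 cor
          by (metis (no_types, lifting) card2_sub mem_Collect_eq)
        then obtain g1 g2 where g1: "g1<n" "g1 < i" "prec i g1" "y i - y g1 \<le> 1" "x g1 \<le> x i"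
          and g2: "g2<n" "g2 < i" "prec i g2" "y i - y g2 \<le> 1" "x i \<le> x g2"
          using botc botc2 by blast
        have "y g1 \<le> y i" "y g2 \<le> y i" using ymono g1 g2 assms(9) by auto
        show ?thesis
        proof (cases "x (i-1) \<le> x i")
          case True
          have "visible_perimeter n x y prec i \<le> 1 + (y i - y (i-1)) + (y i - y g2)"
            by (rule below2[OF ord xb assms(2) assms(9) i1(1) g2(1) i1(2) _ Bi(2) g2(3)]) (use True g2 \<open>y g2 \<le> y i\<close> y2 y2' assms(9) i1 in auto)
          then show ?thesis using vp[OF assms(9)] y2 g2 by linarith
        next
          case False
          have "visible_perimeter n x y prec i \<le> 1 + (y i - y g1) + (y i - y (i-1))"
            by (rule below2[OF ord xb assms(2) assms(9) g1(1) i1(1) _ i1(2) g1(3) Bi(2)]) (use False g1 \<open>y g1 \<le> y i\<close> y2 y2' assms(9) i1 in auto)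
          then show ?thesis using vp[OF assms(9)] y2 g1 by linarith
        qed
      qed
    qed
  qed
qed
end
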